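(* Let $0<\alpha<1$, $\sigma>0$, $N_1$ a positive integer, $h=\sigma^2\alpha^2$, $T=\sigma\alpha\sqrt{N_1}$, $\kappa=\frac\alpha{1-\alpha}$, and let $n\ge1$ be an integer. For $x\in(0,1]$ and complex $u\notin(-\infty,0]$ let $$f(u,x)=\frac{\sin(\alpha\pi)}{\alpha\pi}\frac{1}{2\sqrt u}\frac{xe^{\sqrt u-T}}{e^{\frac1\alpha(\sqrt u-T)}+x}$$ (principal branch of $\sqrt u$). Let $u^*=\frac{1+(1-2\alpha)\sqrt{4\alpha-4\alpha^2+1}}{2(1-\alpha)^2}$, $\gamma=\alpha\log\!\Big(\frac{\frac1\kappa\sqrt{u^*}+1}{\sqrt{u^*}-1}\Big)+\sqrt{u^*}$, $x^*=e^{\frac1\alpha(\gamma-T)}$, $M_0=2\max\left\{\frac{\sigma^2}{4},1+\mathrm{ceil}\!\left(\frac{9\pi^2}{\sigma^2}\right),2\,\mathrm{ceil}\!\left[\left(1+\sqrt{\pi/\sigma}\right)^4\right]\right\}$, and $\Upsilon=\{x\in[x^*,1]:(T+\alpha\log x)^2-\alpha^2\pi^2>M_0h\}$. For $x\in\Upsilon$ put $a=2\alpha\pi(T+\alpha\log x)$. Then, for each choice of sign, $$\left|\int_{h\pm2ia}^{+\infty\pm2ia}f(u,x)e^{\pm i\frac{2n\pi}{h}u}\,\mathrm{d}u\right|=e^{-\frac{4n\pi a}{h}}\left|\int_h^{+\infty}f(t\pm2ia,x)e^{\pm i\frac{2n\pi}{h}t}\,\mathrm{d}t\right|=e^{-\frac{4n\pi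 a}{h}}x^\alpha\,\mathcal{O}(1)$$ uniformly for $x\in\Upsilon$, where the constant in $\mathcal{O}(1)$ is independent of $x$, $h$, $\alpha$, $\sigma$ and $T$.
   Context: $\mathrm{ceil}(y)$ is the least integer $\ge y$. The integral $\int_{h\pm2ia}^{+\infty\pm2ia}$ is along the horizontal half-line $\{t\pm2ia:t\ge h\}$. *)

theory Defs
  imports "HOL-Analysis.Analysis"
begin

definition hA :: "real \<Rightarrow> real \<Rightarrow> real" where
  "hA \<alpha> \<sigma> = \<sigma>^2 * \<alpha>^2"

definition TA :: "real \<Rightarrow> real \<Rightarrow> nat \<Rightarrow> real" where
  "TA \<alpha> \<sigma> N1 = \<sigma> * \<alpha> * sqrt (real N1)"

definition kappaA :: "real \<Rightarrow> real" where
  "kappaA \<alpha> = \<alpha> / (1 - \<alpha>)"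

definition fA :: "real \<Rightarrow> real \<Rightarrow> complex \<Rightarrow> real \<Rightarrow> complex" where
  "fA \<alpha> T u x =
     complex_of_real (sin (\<alpha> * pi) / (\<alpha> * pi)) * (1 / (2 * csqrt u)) *
     (complex_of_real x * exp (csqrt u - complex_of_real T)) /
     (exp ((csqrt u - complex_of_real T) / complex_of_real \<alpha>) + complex_of_real x)"

definition ustarA :: "real \<Rightarrow> real" where
  "ustarA \<alpha> = (1 + (1 - 2*\<alpha>) * sqrt (4*\<alpha> - 4*\<alpha>^2 + 1)) / (2 * (1 - \<alpha>)^2)"

definition gammaA :: "real \<Rightarrow> real" where
  "gammaA \<alpha> = \<alpha> * ln ((sqrt (ustarA \<alpha>) / kappaA \<alpha> + 1) / (sqrt (ustarA \<alpha>) - 1))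
               + sqrt (ustarA \<alpha>)"

definition xstarA :: "real \<Rightarrow> real \<Rightarrow> real" where
  "xstarA \<alpha> T = exp ((gammaA \<alpha> - T) / \<alpha>)"

definition M0A :: "real \<Rightarrow> real" where
  "M0A \<sigma> = 2 * max (\<sigma>^2 / 4)
       (max (1 + real_of_int (ceiling (9 * pi^2 / \<sigma>^2)))
            (2 * real_of_int (ceiling ((1 + sqrt (pi / \<sigma>)) ^ 4))))"

definition UpsilonA :: "real \<Rightarrow> real \<Rightarrow> nat \<Rightarrow> real set" where
  "UpsilonA \<alpha> \<sigma> N1 =
     {x. xstarA \<alpha> (TA \<alpha> \<sigma> N1) \<le> x \<and> x \<le> 1 \<and>
         (TA \<alpha> \<sigma> N1 + \<alpha> * ln x)^2 - \<alpha>^2 * pi^2 > M0A \<sigma> * hA \<alpha> \<sigma>}"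

text \<open>Integral along the horizontal half-line {t + c : t \<ge> h}, parametrised by t (du = dt).\<close>
definition halfline_integral :: "(complex \<Rightarrow> complex) \<Rightarrow> real \<Rightarrow> complex \<Rightarrow> complex" where
  "halfline_integral g h c = integral {h..} (\<lambda>t. g (complex_of_real t + c))"

end

theory Submission
  imports Defs "HOL-Real_Asymp.Real_Asymp"
begin

lemma norm_one_plus_bound:
  fixes z :: complex
  assumes "norm z \<le> 1/2 \<or> norm z \<ge> 2 \<or> Re z \<ge> 0"
  shows "max 1 (norm z) / 2 \<le> norm (1 + z)"
proof -
  have t1: "norm (1::complex) - norm z \<le> norm (1 + z)" using norm_diff_ineq[of 1 z] by simp
  have t2: "norm z - 1 \<le> norm (1 + z)" using norm_diff_ineq[of z 1] by (simp add: add.commute)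
  show ?thesis
  proof (cases "Re z \<ge> 0")
    case True
    have "norm (1+z) \<ge> Re (1+z)" by (rule complex_Re_le_cmod)
    hence a: "norm (1+z) \<ge> 1" using True by simp
    have "(norm (1+z))^2 = (1 + Re z)^2 + (Im z)^2" by (simp add: cmod_power2)
    also have "\<dots> \<ge> (Re z)^2 + (Im z)^2" using True by (simp add: power2_eq_square algebra_simps)
    finally have "(norm z)^2 \<le> (norm (1+z))^2" by (simp add: cmod_power2)
    hence "norm z \<le> norm (1+z)" by (simp add: power2_le_iff_abs_le)
    thus ?thesis using a by (simp add: max_def)
  next
    case False
    thus ?thesis using assms t1 t2 by (auto simp: max_def)
  qed
qed

lemma P_deriv:
  fixes B t :: real
  assumes "B \<noteq> 0"
  shows "((\<lambda>t. sqrt ((sqrt (t^2+B^2) + t)/2)) has_real_derivative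
            sqrt ((sqrt (t^2+B^2) + t)/2) / (2 * sqrt (t^2+B^2))) (at t)"
proof -
  define r where "r = sqrt (t^2+B^2)"
  have B2: "B^2 > 0" using assms by simp
  have r0: "r > 0" unfolding r_def using B2 by (simp add: add_nonneg_pos)
  have rt: "r > \<bar>t\<bar>" unfolding r_def using B2
    by (metis add.commute less_add_same_cancel2 real_less_rsqrt real_sqrt_abs power2_abs)
  have Q0: "(r + t)/2 > 0" using rt by (auto simp: abs_less_iff)
  have d_in: "((\<lambda>t. t^2+B^2) has_real_derivative 2*t) (at t)"
    by (auto intro!: derivative_eq_intros)
  have d_r: "((\<lambda>t. sqrt(t^2+B^2)) has_real_derivative inverse (sqrt (t^2+B^2)) / 2 * (2*t)) (at t)"
    by (rule DERIV_chain2[OF DERIV_real_sqrt d_in]) (use B2 in \<open>simp add: add_nonneg_pos\<close>)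
  have d_Q: "((\<lambda>t. (sqrt(t^2+B^2) + t)/2) has_real_derivative (inverse r / 2 * (2*t) + 1)/2) (at t)"
    unfolding r_def by (intro DERIV_cdivide DERIV_add d_r DERIV_ident)
  have d_P: "((\<lambda>t. sqrt ((sqrt (t^2+B^2) + t)/2)) has_real_derivative
          (inverse (sqrt ((r+t)/2)) / 2) * (((inverse r / 2) * (2 * t) + 1) / 2)) (at t)"
    unfolding r_def by (rule DERIV_chain2[OF DERIV_real_sqrt d_Q[unfolded r_def]]) (use Q0 in \<open>simp add: r_def\<close>)
  have eq: "(inverse (sqrt ((r+t)/2)) / 2) * (((inverse r / 2) * (2 * t) + 1) / 2)
        = sqrt ((r + t)/2) / (2 * r)"
  proof -
    have sq: "sqrt ((r+t)/2) * sqrt ((r+t)/2) = (r+t)/2" using Q0 by simp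
    have sp: "sqrt ((r+t)/2) > 0" using Q0 by simp
    show ?thesis using r0 sp sq by (simp add: field_simps)
  qed
  show ?thesis using d_P eq by (simp add: r_def)
qed

lemma pointwise:
  fixes \<alpha> T L x s B t :: real and c :: complex
  assumes \<alpha>: "0<\<alpha>" "\<alpha><1" and x: "0<x" and L: "L = T + \<alpha>*ln x" and L5: "5*\<alpha> \<le> \<bar>L\<bar>"
    and s: "s \<in> {1,-1}" and t: "0 < t" and B: "B = 4*\<alpha>*pi*L"
    and c: "c = complex_of_real (s*B) * \<i>"
  defines "P \<equiv> sqrt ((sqrt (t^2+B^2) + t)/2)" and "r \<equiv> sqrt (t^2+B^2)"
    and "Kc \<equiv> sin (\<alpha>*pi)/(\<alpha>*pi)"
  shows "exp ((csqrt (complex_of_real t + c) - complex_of_real T)/complex_of_real \<alpha>) + complex_of_real x \<noteq> 0"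
    and "norm (fA \<alpha> T (complex_of_real t + c) x) \<le> Kc * x powr \<alpha> * exp (P - L) * (2*P/r)"
    and "norm (fA \<alpha> T (complex_of_real t + c) x) \<le> Kc * x powr \<alpha> * exp ((P - L) - (P - L)/\<alpha>) * (2*P/r)"
proof -
  define u where "u = complex_of_real t + c"
  have Reu: "Re u = t" and Imu: "Im u = s*B" by (simp_all add: u_def c)
  have s2: "s^2 = 1" using s by auto
  have cm: "cmod u = r" unfolding cmod_def Reu Imu r_def using s2 by (simp add: power_mult_distrib)
  define z where "z = csqrt u"
  have Rez: "Re z = P" unfolding z_def P_def using cm Reu r_def by simp
  have L0: "L \<noteq> 0" using L5 \<alpha> by auto
  have B0: "B \<noteq> 0" using L0 \<alpha> B by simp
  have B2: "B^2 > 0" using B0 by simp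
  have r0: "r > 0" unfolding r_def using B2 by (simp add: add_nonneg_pos)
  have rt: "r > \<bar>t\<bar>" unfolding r_def using B2
    by (metis add.commute less_add_same_cancel2 real_less_rsqrt real_sqrt_abs power2_abs)
  have Q0: "(r + t)/2 > 0" using rt by (auto simp: abs_less_iff)
  have P0: "P > 0" unfolding P_def using Q0 by (simp add: r_def)
  have P2: "P^2 = (r + t)/2" unfolding P_def r_def using Q0 by (simp add: r_def)
  have "Im (z^2) = s * B" unfolding z_def using Imu by simp
  hence Imz: "2 * P * Im z = s * B" using Rez by (simp add: Im_power2)
  have nz: "norm z \<ge> P" using complex_Re_le_cmod[of z] Rez by simp
  define W where "W = (z - complex_of_real L)/complex_of_real \<alpha>"
  have ReW: "Re W = (P - L)/\<alpha>" unfolding W_def using Rez by (simp add: Re_divide_of_real)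
  have ImW: "Im W = Im z/\<alpha>" unfolding W_def by (simp add: Im_divide_of_real)
  have "(z - complex_of_real T)/complex_of_real \<alpha> = W + complex_of_real (ln x)"
    unfolding W_def using \<alpha> by (simp add: L field_simps)
  hence den: "exp ((z - complex_of_real T)/complex_of_real \<alpha>) + complex_of_real x
      = complex_of_real x * (1 + exp W)"
    using x by (simp add: exp_add exp_of_real algebra_simps)
  have nexpW: "norm (exp W) = exp ((P-L)/\<alpha>)" by (simp add: norm_exp_eq_Re ReW)
  have ReexpW: "Re (exp W) = exp ((P-L)/\<alpha>) * cos (Im W)" by (simp add: Re_exp ReW)
  have e1: "exp (1::real) \<ge> 2" using exp_ge_add_one_self[of 1] by simp
  have em1: "exp (-1::real) \<le> 1/2" using e1 by (simp add: exp_minus field_simps)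
  have cond: "norm (exp W) \<le> 1/2 \<or> norm (exp W) \<ge> 2 \<or> Re (exp W) \<ge> 0"
  proof (cases "L < 0")
    case True
    have "P - L \<ge> 1 * \<alpha>" using L5 True P0 by simp
    hence "(P-L)/\<alpha> \<ge> 1" using \<alpha> by (simp add: pos_le_divide_eq)
    hence "exp ((P-L)/\<alpha>) \<ge> exp 1" by simp
    thus ?thesis using e1 nexpW by linarith
  next
    case False
    hence Lp: "L > 0" "5*\<alpha> \<le> L" using L0 L5 by auto
    show ?thesis
    proof (cases "P \<le> 4*L/5")
      case True
      hence "P - L \<le> (-1) * \<alpha>" using Lp by simp
      hence "(P-L)/\<alpha> \<le> -1" using \<alpha> by (simp add: pos_divide_le_eq)
      hence "exp ((P-L)/\<alpha>) \<le> exp (-1)" by simp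
      thus ?thesis using em1 nexpW by linarith
    next
      case F1: False
      show ?thesis
      proof (cases "P \<ge> 4*L/3")
        case True
        hence "P - L \<ge> 1 * \<alpha>" using Lp by simp
        hence "(P-L)/\<alpha> \<ge> 1" using \<alpha> by (simp add: pos_le_divide_eq)
        hence "exp ((P-L)/\<alpha>) \<ge> exp 1" by simp
        thus ?thesis using e1 nexpW by linarith
      next
        case F2: False
        have "Im W = s * (2*pi*L/P)" unfolding ImW using Imz P0 \<alpha> B
          by (simp add: field_simps)
        hence cW: "cos (Im W) = cos (2*pi*L/P)" using s by auto
        have lo: "2*pi*L/P \<ge> 3*pi/2"
        proof -
          have "3*pi/2 * P \<le> 3*pi/2 * (4*L/3)" using F2 by (intro mult_left_mono) auto
          thus ?thesis using P0 by (simp add: pos_le_divide_eq)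
        qed
        have hi: "2*pi*L/P \<le> 5*pi/2"
        proof -
          have "5*pi/2 * (4*L/5) \<le> 5*pi/2 * P" using F1 by (intro mult_left_mono) auto
          thus ?thesis using P0 by (simp add: pos_divide_le_eq)
        qed
        have "cos (2*pi*L/P) = cos ((2*pi*L/P - 2*pi) + 2*pi)" by simp
        also have "\<dots> = cos (2*pi*L/P - 2*pi)" by (rule cos_periodic)
        finally have "cos (2*pi*L/P) \<ge> 0" using lo hi by (auto intro!: cos_ge_zero)
        thus ?thesis using ReexpW cW by simp
      qed
    qed
  qed
  have N: "max 1 (exp ((P-L)/\<alpha>))/2 \<le> norm (1 + exp W)"
    using norm_one_plus_bound[OF cond] nexpW by simp
  have Npos: "norm (1 + exp W) > 0" using N max.cobounded1[of 1 "exp ((P-L)/\<alpha>)"] by linarith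
  show "exp ((csqrt (complex_of_real t + c) - complex_of_real T)/complex_of_real \<alpha>) + complex_of_real x \<noteq> 0"
    using den Npos x unfolding z_def u_def by auto
  have Kc0: "Kc \<ge> 0" unfolding Kc_def using \<alpha> by (intro divide_nonneg_pos sin_ge_zero) auto
  have fe: "fA \<alpha> T (complex_of_real t + c) x = complex_of_real Kc * (complex_of_real x * exp (z - complex_of_real T))
      / (2 * z * (complex_of_real x * (1 + exp W)))"
    unfolding fA_def u_def[symmetric] z_def[symmetric] den Kc_def
    by (simp only: divide_inverse inverse_mult_distrib mult_ac mult_1_left)
  have "norm (fA \<alpha> T (complex_of_real t + c) x) = Kc * (x * exp (P - T)) / (2 * norm z * (x * norm (1 + exp W)))"
    unfolding fe using x Kc0 by (simp add: norm_mult norm_divide Rez)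
  also have "\<dots> = Kc * exp (P - T) / (2 * norm z * norm (1 + exp W))"
    using x by simp
  finally have nf: "norm (fA \<alpha> T (complex_of_real t + c) x) = Kc * exp (P - T) / (2 * norm z * norm (1 + exp W))" .
  have ePT: "exp (P - T) = x powr \<alpha> * exp (P - L)"
    using x by (simp add: powr_def L exp_add[symmetric])
  define A where "A = Kc * x powr \<alpha> * exp (P - L)"
  have A0: "A \<ge> 0" unfolding A_def using Kc0 by simp
  define E where "E = exp ((P-L)/\<alpha>)"
  have E0: "E > 0" unfolding E_def by simp
  have nf2: "norm (fA \<alpha> T (complex_of_real t + c) x) = A / (2 * norm z * norm (1 + exp W))"
    unfolding nf ePT A_def by simp
  have "P * max 1 E \<le> 2 * norm z * norm (1 + exp W)"
  proof -
    have "P * max 1 E \<le> norm z * max 1 E" using nz E0 by (intro mult_right_mono) auto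
    also have "\<dots> \<le> norm z * (2 * norm (1 + exp W))" using N unfolding E_def
      by (intro mult_left_mono) auto
    finally show ?thesis by simp
  qed
  hence nf3: "norm (fA \<alpha> T (complex_of_real t + c) x) \<le> A / (P * max 1 E)"
  proof -
    have m1: "max 1 E > 0" by simp
    have z0: "norm z > 0" using nz P0 by linarith
    have "0 < P * max 1 E" using P0 m1 by simp
    moreover have "0 < 2 * norm z * norm (1 + exp W)" using z0 Npos by simp
    ultimately show ?thesis unfolding nf2 using A0 \<open>P * max 1 E \<le> _\<close>
      by (intro divide_left_mono) auto
  qed
  have iP: "1/P \<le> 2*P/r"
  proof -
    have "r \<le> 2 * P^2" using P2 t by simp
    thus ?thesis using P0 r0 by (simp add: field_simps power2_eq_square)
  qed
  have "A / (P * max 1 E) \<le> A / P" using A0 P0 by (intro divide_left_mono) auto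
  also have "\<dots> = A * (1/P)" by simp
  also have "\<dots> \<le> A * (2*P/r)" using iP A0 by (rule mult_left_mono)
  finally show "norm (fA \<alpha> T (complex_of_real t + c) x) \<le> Kc * x powr \<alpha> * exp (P - L) * (2*P/r)"
    using nf3 unfolding A_def by simp
  have "A / (P * max 1 E) \<le> A / (P * E)" using A0 P0 E0 by (intro divide_left_mono) auto
  also have "\<dots> = (Kc * x powr \<alpha> * exp ((P - L) - (P - L)/\<alpha>)) * (1/P)"
    unfolding A_def E_def by (simp add: exp_diff)
  also have "\<dots> \<le> (Kc * x powr \<alpha> * exp ((P - L) - (P - L)/\<alpha>)) * (2*P/r)"
    using iP Kc0 by (intro mult_left_mono) auto
  finally show "norm (fA \<alpha> T (complex_of_real t + c) x) \<le> Kc * x powr \<alpha> * exp ((P - L) - (P - L)/\<alpha>) * (2*P/r)"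
    using nf3 by simp
qed

lemma lim_exp_sqrt:
  fixes k L :: real assumes "k > 0"
  shows "((\<lambda>y. exp (-(k * (sqrt y - L)))) \<longlongrightarrow> 0) at_top"
  using assms by real_asymp

lemma core:
  fixes \<alpha> T L x s B h :: real and c :: complex and \<theta> :: "real \<Rightarrow> real"
  assumes \<alpha>: "0<\<alpha>" "\<alpha><1" and x: "0<x" and L: "L = T + \<alpha>*ln x" and L5: "5*\<alpha> \<le> \<bar>L\<bar>"
    and Lpi: "4*\<alpha>^2*pi^2 < L^2"
    and s: "s \<in> {1,-1}" and h: "0 < h" and B: "B = 4*\<alpha>*pi*L"
    and c: "c = complex_of_real (s*B) * \<i>" and \<theta>: "continuous_on UNIV \<theta>"
  defines "F \<equiv> \<lambda>t. fA \<alpha> T (complex_of_real t + c) x * exp (complex_of_real s * \<i> * complex_of_real (\<theta> t))"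
  shows "F integrable_on {h..} \<and> norm (integral {h..} F) \<le> 8 * x powr \<alpha>"
proof -
  define P where "P = (\<lambda>t. sqrt ((sqrt (t^2+B^2) + t)/2))"
  define r where "r = (\<lambda>t::real. sqrt (t^2+B^2))"
  define Kc where "Kc = sin (\<alpha>*pi)/(\<alpha>*pi)"
  define X where "X = x powr \<alpha>"
  define G1 where "G1 = (\<lambda>t. Kc * X * exp (P t - L) * (2 * P t / r t))"
  define G2 where "G2 = (\<lambda>t. Kc * X * exp ((P t - L) - (P t - L)/\<alpha>) * (2 * P t / r t))"
  define \<Phi>1 where "\<Phi>1 = (\<lambda>t. 4 * Kc * X * exp (P t - L))"
  define \<Phi>2 where "\<Phi>2 = (\<lambda>t. - 4 * Kc * X * (\<alpha>/(1-\<alpha>)) * exp ((P t - L) - (P t - L)/\<alpha>))"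
  have L0: "L \<noteq> 0" using L5 \<alpha> by auto
  have B0: "B \<noteq> 0" using L0 \<alpha> B by simp
  have B2: "B^2 > 0" using B0 by simp
  have r0: "r t > 0" for t unfolding r_def using B2 by (simp add: add_nonneg_pos)
  have rt: "r t > \<bar>t\<bar>" for t unfolding r_def using B2
    by (metis add.commute less_add_same_cancel2 real_less_rsqrt real_sqrt_abs power2_abs)
  have P0: "P t > 0" for t
  proof -
    have "(r t + t)/2 > 0" using rt[of t] by (auto simp: abs_less_iff)
    thus ?thesis unfolding P_def by (simp add: r_def)
  qed
  have Kc0: "Kc \<ge> 0" unfolding Kc_def using \<alpha> by (intro divide_nonneg_pos sin_ge_zero) auto
  have X0: "X \<ge> 0" unfolding X_def by simp
  have nF: "norm (F t) \<le> G1 t \<and> norm (F t) \<le> G2 t" if "t > 0" for t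
  proof -
    have "norm (exp (complex_of_real s * \<i> * complex_of_real (\<theta> t))) = 1"
      by (simp add: norm_exp_eq_Re)
    hence "norm (F t) = norm (fA \<alpha> T (complex_of_real t + c) x)" unfolding F_def by (simp add: norm_mult)
    thus ?thesis using pointwise(2,3)[OF \<alpha> x L L5 s that B c]
      unfolding G1_def G2_def P_def r_def Kc_def X_def by simp
  qed
  have dP: "(P has_real_derivative P t/(2*r t)) (at t)" for t
    using P_deriv[OF B0, of t] unfolding P_def r_def by simp
  have d1: "(\<Phi>1 has_real_derivative G1 t) (at t)" for t
  proof -
    have "((\<lambda>t. exp (P t - L)) has_real_derivative exp (P t - L) * (P t/(2*r t) - 0)) (at t)"
      by (intro DERIV_chain2[OF DERIV_exp] DERIV_diff dP DERIV_const)
    hence "(\<Phi>1 has_real_derivative 4 * Kc * X * (exp (P t - L) * (P t/(2*r t) - 0))) (at t)"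
      unfolding \<Phi>1_def by (rule DERIV_cmult)
    thus ?thesis by (rule DERIV_cong) (use r0[of t] in \<open>simp add: G1_def field_simps\<close>)
  qed
  have d2: "(\<Phi>2 has_real_derivative G2 t) (at t)" for t
  proof -
    have "((\<lambda>t. exp ((P t - L) - (P t - L)/\<alpha>)) has_real_derivative
        exp ((P t - L) - (P t - L)/\<alpha>) * ((P t/(2*r t) - 0) - (P t/(2*r t) - 0)/\<alpha>)) (at t)"
      by (intro DERIV_chain2[OF DERIV_exp] DERIV_diff DERIV_cdivide dP DERIV_const)
    hence "(\<Phi>2 has_real_derivative - 4 * Kc * X * (\<alpha>/(1-\<alpha>)) *
         (exp ((P t - L) - (P t - L)/\<alpha>) * ((P t/(2*r t) - 0) - (P t/(2*r t) - 0)/\<alpha>))) (at t)"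
      unfolding \<Phi>2_def by (rule DERIV_cmult)
    thus ?thesis by (rule DERIV_cong) (use r0[of t] \<alpha> in \<open>simp add: G2_def field_simps\<close>)
  qed
  have G1nn: "G1 t \<ge> 0" for t unfolding G1_def using Kc0 X0 P0[of t] r0[of t] by simp
  have G2nn: "G2 t \<ge> 0" for t unfolding G2_def using Kc0 X0 P0[of t] r0[of t] by simp
  have Pmono: "P a \<le> P b" if "0 \<le> a" "a \<le> b" for a b
  proof -
    have "a^2 \<le> b^2" using that by (simp add: power_mono)
    hence "sqrt (a^2+B^2) \<le> sqrt (b^2+B^2)" by simp
    hence "(sqrt (a^2+B^2) + a)/2 \<le> (sqrt (b^2+B^2) + b)/2" using that by (intro divide_right_mono add_mono) auto
    thus ?thesis unfolding P_def by (rule real_sqrt_le_mono)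
  qed
  define t0 where "t0 = L^2 - 4*\<alpha>^2*pi^2"
  have t0pos: "t0 > 0" unfolding t0_def using Lpi by simp
  have Pt0: "P t0 = L" if "L > 0"
  proof -
    have "t0^2 + B^2 = (L^2 + 4*\<alpha>^2*pi^2)^2" unfolding t0_def B by algebra
    hence "sqrt (t0^2 + B^2) = L^2 + 4*\<alpha>^2*pi^2" by simp
    hence "(sqrt (t0^2 + B^2) + t0)/2 = L^2" unfolding t0_def by simp
    thus ?thesis unfolding P_def using that by simp
  qed
  define t1 where "t1 = (if L > 0 then max h t0 else h)"
  have ht1: "h \<le> t1" unfolding t1_def by auto
  have t1pos: "t1 > 0" using ht1 h by linarith
  have Pt1: "P t1 \<ge> L"
  proof (cases "L > 0")
    case True
    have "P t0 \<le> P t1" using Pmono[of t0 t1] t0pos True unfolding t1_def by simp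
    thus ?thesis using Pt0 True by simp
  next
    case False thus ?thesis using P0[of t1] by simp
  qed
  have I1: "(G1 has_integral (\<Phi>1 t1 - \<Phi>1 h)) {h..t1}"
    using ht1 d1 by (intro fundamental_theorem_of_calculus)
      (auto simp: has_real_derivative_iff_has_vector_derivative[symmetric] intro: has_field_derivative_at_within)
  have I1b: "\<Phi>1 t1 - \<Phi>1 h \<le> 4 * Kc * X"
  proof (cases "L > 0 \<and> h < t0")
    case True
    hence "t1 = t0" unfolding t1_def by simp
    hence "\<Phi>1 t1 = 4 * Kc * X" unfolding \<Phi>1_def using Pt0 True by simp
    moreover have "\<Phi>1 h \<ge> 0" unfolding \<Phi>1_def using Kc0 X0 by simp
    ultimately show ?thesis by simp
  next
    case False
    hence "t1 = h" unfolding t1_def by auto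
    thus ?thesis using Kc0 X0 by simp
  qed
  have I2: "(G2 has_integral (0 - \<Phi>2 t1)) {t1..}"
  proof (rule has_integral_to_inf)
    show "G2 integrable_on {t1..y}" for y
    proof (cases "t1 \<le> y")
      case True
      have "(G2 has_integral (\<Phi>2 y - \<Phi>2 t1)) {t1..y}"
        using True d2 by (intro fundamental_theorem_of_calculus)
          (auto simp: has_real_derivative_iff_has_vector_derivative[symmetric] intro: has_field_derivative_at_within)
      thus ?thesis by blast
    next
      case False thus ?thesis using integrable_on_empty by simp
    qed
    show "G2 y \<ge> 0" for y by (rule G2nn)
    have ev: "eventually (\<lambda>y. \<Phi>2 y - \<Phi>2 t1 = integral {t1..y} G2) at_top"
    proof (rule eventually_at_top_linorderI[of t1])
      fix y assume "t1 \<le> y"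
      have "(G2 has_integral (\<Phi>2 y - \<Phi>2 t1)) {t1..y}"
        using \<open>t1 \<le> y\<close> d2 by (intro fundamental_theorem_of_calculus)
          (auto simp: has_real_derivative_iff_has_vector_derivative[symmetric] intro: has_field_derivative_at_within)
      thus "\<Phi>2 y - \<Phi>2 t1 = integral {t1..y} G2" by (simp add: integral_unique)
    qed
    define k where "k = (1-\<alpha>)/\<alpha>"
    have k0: "k > 0" unfolding k_def using \<alpha> by simp
    have ek: "(P y - L) - (P y - L)/\<alpha> = -(k * (P y - L))" for y
      unfolding k_def using \<alpha> by (simp add: field_simps)
    have lim0: "((\<lambda>y. exp ((P y - L) - (P y - L)/\<alpha>)) \<longlongrightarrow> 0) at_top"
    proof (rule tendsto_sandwich[OF _ _ tendsto_const lim_exp_sqrt[OF k0, of L]])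
      show "eventually (\<lambda>y. 0 \<le> exp ((P y - L) - (P y - L)/\<alpha>)) at_top" by simp
      show "eventually (\<lambda>y. exp ((P y - L) - (P y - L)/\<alpha>) \<le> exp (-(k * (sqrt y - L)))) at_top"
      proof (rule eventually_at_top_linorderI[of 0])
        fix y :: real assume y: "0 \<le> y"
        have "y \<le> sqrt (y^2+B^2)" using rt[of y] unfolding r_def by simp
        hence "sqrt y \<le> P y" unfolding P_def by (intro real_sqrt_le_mono) simp
        hence "-(k * (P y - L)) \<le> -(k * (sqrt y - L))" using k0 by simp
        thus "exp ((P y - L) - (P y - L)/\<alpha>) \<le> exp (-(k * (sqrt y - L)))" unfolding ek by simp
      qed
    qed
    have "(\<Phi>2 \<longlongrightarrow> - 4 * Kc * X * (\<alpha>/(1-\<alpha>)) * 0) at_top"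
      unfolding \<Phi>2_def by (intro tendsto_mult tendsto_const lim0)
    hence "((\<lambda>y. \<Phi>2 y - \<Phi>2 t1) \<longlongrightarrow> 0 - \<Phi>2 t1) at_top" by (intro tendsto_diff tendsto_const) simp
    thus "((\<lambda>y. integral {t1..y} G2) \<longlongrightarrow> 0 - \<Phi>2 t1) at_top"
      using ev by (rule Lim_transform_eventually)
  qed
  have I2b: "0 - \<Phi>2 t1 \<le> 4 * Kc * X * (\<alpha>/(1-\<alpha>))"
  proof -
    have "(P t1 - L)/\<alpha> \<ge> P t1 - L" using Pt1 \<alpha> by (simp add: pos_le_divide_eq mult_left_le)
    hence e: "exp ((P t1 - L) - (P t1 - L)/\<alpha>) \<le> 1" by simp
    have nn: "4 * Kc * X * (\<alpha>/(1-\<alpha>)) \<ge> 0" using Kc0 X0 \<alpha> by simp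
    have "0 - \<Phi>2 t1 = 4 * Kc * X * (\<alpha>/(1-\<alpha>)) * exp ((P t1 - L) - (P t1 - L)/\<alpha>)"
      unfolding \<Phi>2_def by simp
    thus ?thesis using mult_left_le[OF e nn] by simp
  qed
  have contF: "continuous_on {h..} F"
  proof (rule continuous_at_imp_continuous_on, intro ballI)
    fix t assume "t \<in> {h..}"
    hence t: "t > 0" using h by simp
    have nn: "complex_of_real t + c \<notin> \<real>\<^sub>\<le>\<^sub>0" using t c by (auto simp: complex_nonpos_Reals_iff)
    have u0: "complex_of_real t + c \<noteq> 0" using t c by (auto simp: complex_eq_iff)
    hence z0: "csqrt (complex_of_real t + c) \<noteq> 0" by simp
    have d0: "exp ((csqrt (complex_of_real t + c) - complex_of_real T)/complex_of_real \<alpha>) + complex_of_real x \<noteq> 0"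
      by (rule pointwise(1)[OF \<alpha> x L L5 s t B c])
    have ct: "isCont \<theta> t" using \<theta> by (simp add: continuous_on_eq_continuous_at)
    have c1: "isCont (\<lambda>t. csqrt (complex_of_real t + c)) t"
      by (rule isCont_csqrt'[where f="\<lambda>t. complex_of_real t + c", OF _ nn]) (intro continuous_intros)
    have c2: "isCont (\<lambda>t. complex_of_real (\<theta> t)) t"
      by (intro continuous_intros ct)
    define zf where "zf = (\<lambda>t. csqrt (complex_of_real t + c))"
    have c1': "isCont zf t" using c1 unfolding zf_def .
    have c3: "isCont (\<lambda>t. exp ((zf t - complex_of_real T)/complex_of_real \<alpha>) + complex_of_real x) t"
      by (intro continuous_intros c1') (use \<alpha> in simp)
    have c4: "isCont (\<lambda>t. complex_of_real x * exp (zf t - complex_of_real T)) t"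
      by (intro continuous_intros c1')
    have c5: "isCont (\<lambda>t. 1 / (2 * zf t)) t"
      by (rule continuous_divide) (use z0 c1' in \<open>auto simp: zf_def intro!: continuous_intros\<close>)
    have c6: "isCont (\<lambda>t. exp (complex_of_real s * \<i> * complex_of_real (\<theta> t))) t"
      by (intro continuous_intros c2)
    have "isCont (\<lambda>t. complex_of_real Kc * (1 / (2 * zf t)) * (complex_of_real x * exp (zf t - complex_of_real T))
       / (exp ((zf t - complex_of_real T)/complex_of_real \<alpha>) + complex_of_real x)
       * exp (complex_of_real s * \<i> * complex_of_real (\<theta> t))) t"
      by (intro continuous_mult continuous_divide continuous_const c3 c4 c5 c6) (use d0 in \<open>simp add: zf_def\<close>)
    thus "isCont F t" unfolding F_def fA_def zf_def Kc_def .
  qed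
  have mF1: "F \<in> borel_measurable (lebesgue_on {h..t1})"
    by (rule continuous_imp_measurable_on_sets_lebesgue) (auto intro: continuous_on_subset[OF contF])
  have mF2: "F \<in> borel_measurable (lebesgue_on {t1..})"
    using ht1 by (intro continuous_imp_measurable_on_sets_lebesgue) (auto intro: continuous_on_subset[OF contF])
  have F1: "F integrable_on {h..t1}"
    using measurable_bounded_by_integrable_imp_absolutely_integrable[OF mF1 _ has_integral_integrable[OF I1]]
      nF h by (auto simp: absolutely_integrable_on_def)
  have F2: "F integrable_on {t1..}"
    using measurable_bounded_by_integrable_imp_absolutely_integrable[OF mF2 _ has_integral_integrable[OF I2]]
      nF t1pos by (auto simp: absolutely_integrable_on_def)
  have nb1: "norm (integral {h..t1} F) \<le> \<Phi>1 t1 - \<Phi>1 h"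
    using integral_norm_bound_integral[OF F1 has_integral_integrable[OF I1]] nF h I1
    by (auto simp: integral_unique)
  have nb2: "norm (integral {t1..} F) \<le> 0 - \<Phi>2 t1"
    using integral_norm_bound_integral[OF F2 has_integral_integrable[OF I2]] nF t1pos I2
    by (auto simp: integral_unique)
  have U: "{h..t1} \<union> {t1..} = {h..}" using ht1 by auto
  have N: "{h..t1} \<inter> {t1..} = {t1}" using ht1 by auto
  have FU: "(F has_integral (integral {h..t1} F + integral {t1..} F)) {h..}"
    using has_integral_Un[OF integrable_integral[OF F1] integrable_integral[OF F2]] U N by simp
  have Kc2: "Kc \<le> 2 * (1 - \<alpha>)"
  proof (cases "\<alpha> \<le> 1/2")
    case True
    have "sin (\<alpha>*pi) \<le> \<alpha>*pi" using \<alpha> by (intro sin_x_le_x) simp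
    hence "Kc \<le> 1" unfolding Kc_def using \<alpha> by simp
    thus ?thesis using True by simp
  next
    case False
    have "sin (\<alpha>*pi) = sin ((1-\<alpha>)*pi)" by (simp add: algebra_simps sin_diff)
    also have "\<dots> \<le> (1-\<alpha>)*pi" using \<alpha> by (intro sin_x_le_x) simp
    finally have "Kc \<le> (1-\<alpha>)/\<alpha>" unfolding Kc_def using \<alpha> by (simp add: divide_simps)
    also have "\<dots> \<le> 2*(1-\<alpha>)"
    proof -
      have "(1-\<alpha>) * 1 \<le> (1-\<alpha>) * (2*\<alpha>)" using False \<alpha> by (intro mult_left_mono) auto
      thus ?thesis using \<alpha> by (simp add: pos_divide_le_eq mult_ac)
    qed
    finally show ?thesis .
  qed
  have "norm (integral {h..} F) \<le> norm (integral {h..t1} F) + norm (integral {t1..} F)"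
    using integral_unique[OF FU] by (simp add: norm_triangle_ineq)
  also have "\<dots> \<le> 4 * Kc * X + 4 * Kc * X * (\<alpha>/(1-\<alpha>))" using nb1 nb2 I1b I2b by linarith
  also have "\<dots> = 4 * X * (Kc / (1-\<alpha>))" using \<alpha> by (simp add: field_simps)
  also have "\<dots> \<le> 4 * X * 2" using Kc2 \<alpha> X0 by (intro mult_left_mono) (auto simp: divide_simps)
  finally show ?thesis using FU X_def by auto
qed

theorem lemmaA3:
  fixes n :: nat
  assumes "n \<ge> 1"
  shows "\<exists>C::real. \<forall>(\<alpha>::real) (\<sigma>::real) (N1::nat) (x::real) (s::real).
     0 < \<alpha> \<and> \<alpha> < 1 \<and> 0 < \<sigma> \<and> N1 \<ge> 1 \<and> s \<in> {1, -1} \<and> x \<in> UpsilonA \<alpha> \<sigma> N1 \<longrightarrow>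
     (let h = hA \<alpha> \<sigma>; T = TA \<alpha> \<sigma> N1; a = 2 * \<alpha> * pi * (T + \<alpha> * ln x);
          c = complex_of_real (s * 2 * a) * \<i>;
          g = (\<lambda>u. fA \<alpha> T u x * exp (complex_of_real s * \<i> * complex_of_real (2 * real n * pi / h) * u))
      in (\<lambda>t. g (complex_of_real t + c)) integrable_on {h..} \<and>
         norm (halfline_integral g h c) =
           exp (- 4 * real n * pi * a / h) *
           norm (integral {h..} (\<lambda>t. fA \<alpha> T (complex_of_real t + c) x *
                   exp (complex_of_real s * \<i> * complex_of_real (2 * real n * pi * t / h)))) \<and>
         exp (- 4 * real n * pi * a / h) *
           norm (integral {h..} (\<lambda>t. fA \<alpha> T (complex_of_real t + c) x *
                   exp (complex_of_real s * \<i> * complex_of_real (2 * real n * pi * t / h))))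
           \<le> exp (- 4 * real n * pi * a / h) * (x powr \<alpha> * C))"
proof (intro exI[of _ 8] allI impI)
  fix \<alpha> \<sigma> :: real and N1 :: nat and x s :: real
  assume H: "0 < \<alpha> \<and> \<alpha> < 1 \<and> 0 < \<sigma> \<and> N1 \<ge> 1 \<and> s \<in> {1, -1} \<and> x \<in> UpsilonA \<alpha> \<sigma> N1"
  hence \<alpha>: "0 < \<alpha>" "\<alpha> < 1" and \<sigma>: "0 < \<sigma>" and s: "s \<in> {1,-1}" and xU: "x \<in> UpsilonA \<alpha> \<sigma> N1" by auto
  define h where "h = hA \<alpha> \<sigma>"
  define T where "T = TA \<alpha> \<sigma> N1"
  define L where "L = T + \<alpha> * ln x"
  define a where "a = 2 * \<alpha> * pi * L"
  define c where "c = complex_of_real (s * 2 * a) * \<i>"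
  define B where "B = 4*\<alpha>*pi*L"
  define g where "g = (\<lambda>u. fA \<alpha> T u x * exp (complex_of_real s * \<i> * complex_of_real (2 * real n * pi / h) * u))"
  define F where "F = (\<lambda>t. fA \<alpha> T (complex_of_real t + c) x *
                   exp (complex_of_real s * \<i> * complex_of_real (2 * real n * pi * t / h)))"
  have h0: "h > 0" unfolding h_def hA_def using \<alpha> \<sigma> by simp
  have x0: "x > 0" using xU unfolding UpsilonA_def xstarA_def T_def
    by (auto intro: less_le_trans[OF exp_gt_zero])
  have Lsq: "L^2 - \<alpha>^2 * pi^2 > M0A \<sigma> * h" using xU unfolding UpsilonA_def L_def T_def h_def by auto
  have M0: "M0A \<sigma> \<ge> 18 * pi^2 / \<sigma>^2"
  proof -
    define q where "q = 9 * pi^2 / \<sigma>^2"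
    define m where "m = max (\<sigma>^2 / 4) (max (1 + real_of_int (ceiling q))
            (2 * real_of_int (ceiling ((1 + sqrt (pi / \<sigma>)) ^ 4))))"
    have 1: "q \<le> real_of_int (ceiling q)" by (rule le_of_int_ceiling)
    have 2: "1 + real_of_int (ceiling q) \<le> m" unfolding m_def by simp
    have "M0A \<sigma> = 2 * m" unfolding M0A_def m_def q_def ..
    hence "2 + 2 * q \<le> M0A \<sigma>" using 1 2 by linarith
    moreover have "18 * pi^2 / \<sigma>^2 \<le> 2 + 2 * q" unfolding q_def by simp
    ultimately show ?thesis by linarith
  qed
  have "M0A \<sigma> * h \<ge> 18 * pi^2 / \<sigma>^2 * h" using M0 h0 by (intro mult_right_mono) auto
  also have "18 * pi^2 / \<sigma>^2 * h = 18 * (pi^2 * \<alpha>^2)" unfolding h_def hA_def using \<sigma> by simp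
  finally have f1: "18 * (pi^2 * \<alpha>^2) \<le> M0A \<sigma> * h" .
  have f2: "M0A \<sigma> * h < L^2 - pi^2 * \<alpha>^2" using Lsq by (simp add: mult.commute)
  define w where "w = pi^2 * \<alpha>^2"
  have L19: "19 * w < L^2" using f1 f2 unfolding w_def by linarith
  have pi9: "pi^2 \<ge> 9"
  proof -
    have "3 * 3 \<le> pi * pi" using pi_gt3 by (intro mult_mono) auto
    thus ?thesis by (simp add: power2_eq_square)
  qed
  have w9: "9 * \<alpha>^2 \<le> w" unfolding w_def using pi9 by (intro mult_right_mono) auto
  have wpos: "w > 0" unfolding w_def using \<alpha> by simp
  have "(5*\<alpha>)^2 \<le> \<bar>L\<bar>^2"
  proof -
    have "(5*\<alpha>)^2 = 25 * \<alpha>^2" by (simp add: power_mult_distrib)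
    thus ?thesis using L19 w9 wpos by simp
  qed
  hence L5: "5*\<alpha> \<le> \<bar>L\<bar>" by (rule power2_le_imp_le) simp
  have "4*\<alpha>^2*pi^2 = 4 * w" unfolding w_def by simp
  hence Lpi: "4*\<alpha>^2*pi^2 < L^2" using L19 wpos by linarith
  have cB: "c = complex_of_real (s*B) * \<i>" unfolding c_def B_def a_def by (simp add: algebra_simps)
  have \<theta>: "continuous_on UNIV (\<lambda>t. 2 * real n * pi * t / h)" using h0 by (intro continuous_intros) auto
  have core1: "F integrable_on {h..} \<and> norm (integral {h..} F) \<le> 8 * x powr \<alpha>"
    using core[OF \<alpha> x0 L_def L5 Lpi s h0 B_def cB \<theta>] unfolding F_def .
  define E where "E = exp (- 4 * real n * pi * a / h)"
  have gF: "g (complex_of_real t + c) = complex_of_real E * F t" for t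
  proof -
    have "complex_of_real s * \<i> * complex_of_real (2 * real n * pi / h) * (complex_of_real t + c)
        = complex_of_real s * \<i> * complex_of_real (2 * real n * pi * t / h) + complex_of_real (- 4 * real n * pi * a / h)"
      using s unfolding c_def by (auto simp: complex_eq_iff field_simps)
    moreover have e2: "exp (complex_of_real (- 4 * real n * pi * a / h)) = complex_of_real E"
      unfolding E_def by (rule exp_of_real)
    ultimately have "exp (complex_of_real s * \<i> * complex_of_real (2 * real n * pi / h) * (complex_of_real t + c))
        = exp (complex_of_real s * \<i> * complex_of_real (2 * real n * pi * t / h)) * complex_of_real E"
      by (simp only: exp_add)
    thus ?thesis unfolding g_def F_def by (simp add: mult_ac)
  qed
  have eqfun: "(\<lambda>t. g (complex_of_real t + c)) = (\<lambda>t. complex_of_real E * F t)" using gF by auto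
  have E0: "E \<ge> 0" unfolding E_def by simp
  have int: "(\<lambda>t. g (complex_of_real t + c)) integrable_on {h..}"
    unfolding eqfun using core1 by (intro integrable_on_mult_right) auto
  have nrm: "norm (halfline_integral g h c) = E * norm (integral {h..} F)"
    unfolding halfline_integral_def eqfun using E0 by (simp add: norm_mult)
  have bnd: "E * norm (integral {h..} F) \<le> E * (x powr \<alpha> * 8)"
    using core1 E0 by (intro mult_left_mono) (auto simp: mult.commute)
  show "let h = hA \<alpha> \<sigma>; T = TA \<alpha> \<sigma> N1; a = 2 * \<alpha> * pi * (T + \<alpha> * ln x);
          c = complex_of_real (s * 2 * a) * \<i>;
          g = (\<lambda>u. fA \<alpha> T u x * exp (complex_of_real s * \<i> * complex_of_real (2 * real n * pi / h) * u))
      in (\<lambda>t. g (complex_of_real t + c)) integrable_on {h..} \<and>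
         norm (halfline_integral g h c) =
           exp (- 4 * real n * pi * a / h) *
           norm (integral {h..} (\<lambda>t. fA \<alpha> T (complex_of_real t + c) x *
                   exp (complex_of_real s * \<i> * complex_of_real (2 * real n * pi * t / h)))) \<and>
         exp (- 4 * real n * pi * a / h) *
           norm (integral {h..} (\<lambda>t. fA \<alpha> T (complex_of_real t + c) x *
                   exp (complex_of_real s * \<i> * complex_of_real (2 * real n * pi * t / h))))
           \<le> exp (- 4 * real n * pi * a / h) * (x powr \<alpha> * 8)"
    using int nrm bnd unfolding h_def T_def L_def a_def c_def g_def F_def E_def Let_def by blast
qed

end
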